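(* Let $k,l,m,n\in\mathbb{N}_0$, let $I\subset\mathbb{R}$ be an interval, and suppose that $F$ is $k$-compatible with $\Pi_n$ of degree $l$ on $I$. Let \[ \mathcal{F}_{m,n}=\{p(x)+F(x)q(x):\ p\in\Pi_m,\ q\in\Pi_n\}, \] considered as functions on $I$. If $k>m$, then every nonzero $f\in\mathcal{F}_{m,n}$ has at most $k+l$ distinct zeros in $I$. If, in addition, $l<n-(k-m)+2$, then every nonzero $f\in\mathcal{F}_{m,n}$ has fewer than $m+n+2$ distinct zeros in $I$.
   Context: $\Pi_n$ denotes the space of real polynomials of degree at most $n$. For $k,n,l\in\mathbb{N}_0$ and an interval $I$, a function $F:I\to\mathbb{R}$ is called $k$-compatible with $\Pi_n$ of degree $l$ on $I$ if: (1) $F\in C^{k+1}(I)$; (2) there is a function $\tilde F:I\to\mathbb{R}$ (depending on $k$ and $n$ but not on $q$) which is monotone on $I$ and satisfies $\tilde F(x)\ne0$ for all $x\in I$, such that for every nonzero $q\in\Pi_n$ there is a function $\tilde q:I\to\mathbb{R}$ with $\frac{d^k}{dx^k}(Fq)=\tilde F\,\tilde q$ on $I$ and $\tilde q$ has at most $l$ distinct zeros in $I$. *)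

theory Defs
  imports "HOL-Analysis.Analysis" "HOL-Computational_Algebra.Polynomial"
begin

definition deriv_chain :: "real set \<Rightarrow> nat \<Rightarrow> (nat \<Rightarrow> real \<Rightarrow> real) \<Rightarrow> bool" where
  "deriv_chain I N D \<longleftrightarrow>
     (\<forall>j<N. \<forall>x\<in>I. (D j has_real_derivative D (Suc j) x) (at x within I))"

definition C_on :: "nat \<Rightarrow> real set \<Rightarrow> (real \<Rightarrow> real) \<Rightarrow> bool" where
  "C_on r I g \<longleftrightarrow>
     (\<exists>D. (\<forall>x\<in>I. D 0 x = g x) \<and> deriv_chain I r D \<and> continuous_on I (D r))"

definition has_kth_deriv_on :: "real set \<Rightarrow> nat \<Rightarrow> (real \<Rightarrow> real) \<Rightarrow> (real \<Rightarrow> real) \<Rightarrow> bool" where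
  "has_kth_deriv_on I k g h \<longleftrightarrow>
     (\<exists>D. (\<forall>x\<in>I. D 0 x = g x) \<and> deriv_chain I k D \<and> (\<forall>x\<in>I. D k x = h x))"

definition compatible :: "nat \<Rightarrow> nat \<Rightarrow> nat \<Rightarrow> real set \<Rightarrow> (real \<Rightarrow> real) \<Rightarrow> bool" where
  "compatible k n l I F \<longleftrightarrow>
     C_on (Suc k) I F \<and>
     (\<exists>Ft. (monotone_on I (\<le>) (\<le>) Ft \<or> monotone_on I (\<le>) (\<ge>) Ft) \<and>
           (\<forall>x\<in>I. Ft x \<noteq> 0) \<and>
           (\<forall>q :: real poly. q \<noteq> 0 \<and> degree q \<le> n \<longrightarrow>
              (\<exists>qt. has_kth_deriv_on I k (\<lambda>x. F x * poly q x) (\<lambda>x. Ft x * qt x) \<and>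
                    finite {x\<in>I. qt x = 0} \<and> card {x\<in>I. qt x = 0} \<le> l)))"

definition Fam :: "nat \<Rightarrow> nat \<Rightarrow> (real \<Rightarrow> real) \<Rightarrow> (real \<Rightarrow> real) set" where
  "Fam m n F = {(\<lambda>x. poly p x + F x * poly q x) | p q :: real poly. degree p \<le> m \<and> degree q \<le> n}"

end

theory Submission
  imports Defs
begin

lemma rolle_step:
  fixes g g' :: "real \<Rightarrow> real"
  assumes I: "is_interval I"
    and d: "\<And>x. x \<in> I \<Longrightarrow> (g has_real_derivative g' x) (at x within I)"
    and a: "a \<in> I" "b \<in> I" "a < b" "g a = 0" "g b = 0"
  shows "\<exists>c. a < c \<and> c < b \<and> g' c = 0"
proof -
  have sub0: "x \<in> I" if "a \<le> x" "x \<le> b" for x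
    using I a(1,2) that unfolding is_interval_1 by blast
  have sub: "{a..b} \<subseteq> I" using sub0 by auto
  have cont: "continuous_on I g" by (rule DERIV_continuous_on) (rule d)
  have "\<exists>c. a < c \<and> c < b \<and> (\<lambda>v. g' c * v) = (\<lambda>v. 0)"
  proof (rule Rolle_deriv[OF \<open>a<b\<close>])
    show "g a = g b" using a by simp
    show "continuous_on {a..b} g" using cont sub continuous_on_subset by blast
    fix x assume x: "a < x" "x < b"
    have "x \<in> I" using x sub by auto
    then have "(g has_real_derivative g' x) (at x within {a<..<b})"
      using DERIV_subset[OF d[OF \<open>x \<in> I\<close>], of "{a<..<b}"] sub by fastforce
    then have "(g has_real_derivative g' x) (at x)"
      using x at_within_open[of x "{a<..<b}"] by simp
    then show "(g has_derivative (\<lambda>v. g' x * v)) (at x)"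
      by (simp add: has_field_derivative_def)
  qed
  then obtain c where "a < c" "c < b" "(\<lambda>v. g' c * v) = (\<lambda>v. 0)" by blast
  then show ?thesis by (metis mult_1_right)
qed

lemma rolle_count:
  fixes g g' :: "real \<Rightarrow> real"
  assumes I: "is_interval I"
    and d: "\<And>x. x \<in> I \<Longrightarrow> (g has_real_derivative g' x) (at x within I)"
  shows "finite S \<Longrightarrow> S \<subseteq> I \<Longrightarrow> (\<forall>x\<in>S. g x = 0) \<Longrightarrow> S \<noteq> {} \<Longrightarrow>
     \<exists>T. finite T \<and> T \<subseteq> I \<and> card T + 1 \<ge> card S \<and> (\<forall>x\<in>T. g' x = 0) \<and> (\<forall>x\<in>T. x < Max S)"
proof (induction "card S" arbitrary: S)
  case 0 then show ?case by simp
next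
  case (Suc N)
  define a where "a = Max S"
  have aS: "a \<in> S" using Suc a_def by simp
  define S' where "S' = S - {a}"
  have cS': "card S' = N" using Suc aS S'_def by simp
  show ?case
  proof (cases "S' = {}")
    case True
    then show ?thesis using cS' Suc by (intro exI[of _ "{}"]) auto
  next
    case False
    have fS': "finite S'" using Suc S'_def by simp
    obtain T' where T': "finite T'" "T' \<subseteq> I" "card T' + 1 \<ge> card S'" "\<forall>x\<in>T'. g' x = 0"
      "\<forall>x\<in>T'. x < Max S'"
      using Suc.hyps(1)[OF cS'[symmetric] fS'] Suc.prems False S'_def by auto
    define b where "b = Max S'"
    have bS': "b \<in> S'" using fS' False b_def by simp
    have ba: "b < a" using bS' S'_def Suc.prems a_def
      by (metis DiffE Max_ge insertI1 order_le_less)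
    obtain c where c: "b < c" "c < a" "g' c = 0"
      using rolle_step[OF I d, of b a] bS' aS Suc.prems ba S'_def by auto
    have bI: "b \<in> I" and aI: "a \<in> I" using bS' aS Suc.prems S'_def by auto
    have cI: "c \<in> I" using I bI aI c(1,2) less_imp_le[OF c(1)] less_imp_le[OF c(2)]
      unfolding is_interval_1 by blast
    have cT: "c \<notin> T'" using T'(5) c b_def by auto
    show ?thesis
    proof (intro exI[of _ "insert c T'"] conjI)
      show "card S \<le> card (insert c T') + 1" using T' cT cS' Suc.hyps(2) by simp
      show "\<forall>x\<in>insert c T'. x < Max S" using T'(5) c b_def a_def ba by auto
    qed (use T' c cI in auto)
  qed
qed


lemma pderiv_pow_zero:
  fixes p :: "real poly"
  shows "degree p < j \<Longrightarrow> (pderiv ^^ j) p = 0"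
proof (induction j arbitrary: p)
  case 0 then show ?case by simp
next
  case (Suc j)
  have e: "(pderiv ^^ Suc j) p = (pderiv ^^ j) (pderiv p)" by (simp only: funpow_Suc_right o_def)
  show ?case
  proof (cases "degree p = 0")
    case True
    then have "pderiv p = 0" by (simp add: pderiv_eq_0_iff)
    moreover have "(pderiv ^^ j) 0 = (0::real poly)" by (induction j) auto
    ultimately show ?thesis using e by simp
  next
    case False
    then have "degree (pderiv p) < j" using Suc.prems by (simp add: degree_pderiv)
    then show ?thesis using e Suc.IH by simp
  qed
qed

lemma iter_rolle:
  fixes E :: "nat \<Rightarrow> real \<Rightarrow> real"
  assumes I: "is_interval I"
    and ch: "\<And>j x. j < k \<Longrightarrow> x \<in> I \<Longrightarrow> (E j has_real_derivative E (Suc j) x) (at x within I)"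
    and S: "finite S" "S \<subseteq> I" "\<forall>x\<in>S. E 0 x = 0"
  shows "j \<le> k \<Longrightarrow> \<exists>T. finite T \<and> T \<subseteq> I \<and> card T + j \<ge> card S \<and> (\<forall>x\<in>T. E j x = 0)"
proof (induction j)
  case 0 then show ?case using S by auto
next
  case (Suc j)
  then obtain T where T: "finite T" "T \<subseteq> I" "card T + j \<ge> card S" "\<forall>x\<in>T. E j x = 0" by auto
  show ?case
  proof (cases "T = {}")
    case True then show ?thesis using T by (intro exI[of _ "{}"]) auto
  next
    case False
    have d: "\<And>x. x \<in> I \<Longrightarrow> (E j has_real_derivative E (Suc j) x) (at x within I)"
      using ch Suc.prems by simp
    obtain T' where "finite T'" "T' \<subseteq> I" "card T' + 1 \<ge> card T" "\<forall>x\<in>T'. E (Suc j) x = 0"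
      using rolle_count[OF I d, of T] T False by blast
    then show ?thesis using T by (intro exI[of _ T']) auto
  qed
qed

lemma partA:
  fixes k l m n :: nat and I :: "real set" and F :: "real \<Rightarrow> real"
  assumes I: "is_interval I"
    and comp: "compatible k n l I F"
    and km: "k > m"
    and f: "f \<in> Fam m n F" and nz: "\<exists>x\<in>I. f x \<noteq> 0"
  shows "finite {x\<in>I. f x = 0} \<and> card {x\<in>I. f x = 0} \<le> k + l"
proof -
  obtain p q :: "real poly" where fpq: "f = (\<lambda>x. poly p x + F x * poly q x)"
    and dp: "degree p \<le> m" and dq: "degree q \<le> n"
    using f unfolding Fam_def by blast
  show ?thesis
  proof (cases "q = 0")
    case True
    then have ff: "f = poly p" using fpq by auto
    have p0: "p \<noteq> 0" using nz ff by auto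
    have sub: "{x\<in>I. f x = 0} \<subseteq> {x. poly p x = 0}" using ff by auto
    have fin: "finite {x. poly p x = 0}" using poly_roots_finite[OF p0] .
    have c1: "card {x\<in>I. f x = 0} \<le> card {x. poly p x = 0}" using card_mono[OF fin sub] .
    have c2: "card {x. poly p x = 0} \<le> degree p" using card_poly_roots_bound[OF p0] .
    have f1: "finite {x\<in>I. f x = 0}" using finite_subset[OF sub fin] .
    show ?thesis using f1 c1 c2 dp km by linarith
  next
    case False
    obtain Ft where Ftall: "(monotone_on I (\<le>) (\<le>) Ft \<or> monotone_on I (\<le>) (\<ge>) Ft) \<and>
           (\<forall>x\<in>I. Ft x \<noteq> 0) \<and>
           (\<forall>q :: real poly. q \<noteq> 0 \<and> degree q \<le> n \<longrightarrow>
              (\<exists>qt. has_kth_deriv_on I k (\<lambda>x. F x * poly q x) (\<lambda>x. Ft x * qt x) \<and>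
                    finite {x\<in>I. qt x = 0} \<and> card {x\<in>I. qt x = 0} \<le> l))"
      using conjunct2[OF comp[unfolded compatible_def]] by (rule exE)
    have Ft0: "\<forall>x\<in>I. Ft x \<noteq> 0" using conjunct1[OF conjunct2[OF Ftall]] .
    have Fq: "\<exists>qt. has_kth_deriv_on I k (\<lambda>x. F x * poly q x) (\<lambda>x. Ft x * qt x) \<and>
                    finite {x\<in>I. qt x = 0} \<and> card {x\<in>I. qt x = 0} \<le> l"
      using conjunct2[OF conjunct2[OF Ftall], rule_format, of q] False dq by simp
    obtain qt where hk: "has_kth_deriv_on I k (\<lambda>x. F x * poly q x) (\<lambda>x. Ft x * qt x)"
      and qtfin: "finite {x\<in>I. qt x = 0}" and qtc: "card {x\<in>I. qt x = 0} \<le> l"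
      using Fq by (elim exE conjE)
    obtain D where D0: "\<forall>x\<in>I. D 0 x = F x * poly q x" and Dch: "deriv_chain I k D"
      and Dk: "\<forall>x\<in>I. D k x = Ft x * qt x"
      using hk unfolding has_kth_deriv_on_def by blast
    define E where "E j x = D j x + poly ((pderiv ^^ j) p) x" for j x
    have ch: "(E j has_real_derivative E (Suc j) x) (at x within I)" if "j < k" "x \<in> I" for j x
    proof -
      have "(D j has_real_derivative D (Suc j) x) (at x within I)"
        using Dch that unfolding deriv_chain_def by blast
      moreover have "((\<lambda>x. poly ((pderiv ^^ j) p) x) has_real_derivative poly ((pderiv ^^ Suc j) p) x) (at x within I)"
        using has_field_derivative_at_within[OF poly_DERIV[of "(pderiv ^^ j) p" x], of I] by simp
      ultimately show ?thesis unfolding E_def by (rule DERIV_add)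
    qed
    have Ek: "E k x = Ft x * qt x" if "x \<in> I" for x
      using Dk that pderiv_pow_zero[of p k] dp km unfolding E_def by simp
    have E0: "E 0 x = f x" if "x \<in> I" for x using D0 that fpq unfolding E_def by simp
    have bound: "card S \<le> k + l" if S: "finite S" "S \<subseteq> {x\<in>I. f x = 0}" for S
    proof (rule ccontr)
      assume c: "\<not> card S \<le> k + l"
      obtain T where T: "finite T" "T \<subseteq> I" "card T + k \<ge> card S" "\<forall>x\<in>T. E k x = 0"
      proof -
        have SI: "S \<subseteq> I" and SZ: "\<forall>x\<in>S. E 0 x = 0" using S E0 by auto
        show ?thesis using iter_rolle[where E=E and k=k and S=S and j=k and I=I, OF I ch S(1) SI SZ] that by blast
      qed
      have "T \<subseteq> {x\<in>I. qt x = 0}"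
      proof
        fix x assume xT: "x \<in> T"
        then have xI: "x \<in> I" using T(2) by auto
        have "Ft x * qt x = 0" using Ek[OF xI] T(4) xT by simp
        then show "x \<in> {x\<in>I. qt x = 0}" using Ft0 xI by simp
      qed
      then have "card T \<le> l" using card_mono[OF qtfin] qtc by (meson order_trans)
      then show False using T c by linarith
    qed
    have fin: "finite {x\<in>I. f x = 0}"
    proof (rule ccontr)
      assume "infinite {x\<in>I. f x = 0}"
      then obtain B where "finite B" "card B = Suc (k + l)" "B \<subseteq> {x\<in>I. f x = 0}"
        using infinite_arbitrarily_large by blast
      then show False using bound by fastforce
    qed
    then show ?thesis using bound by blast
  qed
qed

theorem proposition1:
  fixes k l m n :: nat and I :: "real set" and F :: "real \<Rightarrow> real"
  assumes "is_interval I"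
    and "compatible k n l I F"
    and "k > m"
  shows "(\<forall>f\<in>Fam m n F. (\<exists>x\<in>I. f x \<noteq> 0) \<longrightarrow>
            finite {x\<in>I. f x = 0} \<and> card {x\<in>I. f x = 0} \<le> k + l)
       \<and> (int l < int n - (int k - int m) + 2 \<longrightarrow>
            (\<forall>f\<in>Fam m n F. (\<exists>x\<in>I. f x \<noteq> 0) \<longrightarrow>
               finite {x\<in>I. f x = 0} \<and> card {x\<in>I. f x = 0} < m + n + 2))"
proof (intro conjI impI ballI)
  fix f assume "f \<in> Fam m n F" "\<exists>x\<in>I. f x \<noteq> 0"
  note A = partA[OF assms this]
  show "finite {x\<in>I. f x = 0}" using A by blast
  show "card {x\<in>I. f x = 0} \<le> k + l" using A by blast
next
  fix f assume h: "int l < int n - (int k - int m) + 2" "f \<in> Fam m n F" "\<exists>x\<in>I. f x \<noteq> 0"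
  note A = partA[OF assms h(2,3)]
  show "finite {x\<in>I. f x = 0}" using A by blast
  show "card {x\<in>I. f x = 0} < m + n + 2" using A h(1) by linarith
qed

end
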